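(* Let $L, H \in \mathcal{L}$ and $g = (w,t) \in S$ with $L^g \leq H$. Then: (a) $\zeta_{L,H,g} = \hat{\zeta}_{L,H,w} - \lambda^w_t$; (b) if $\zeta_{L,H,g} \in Z^1(L,T)$, then $\zeta_{L,H,h} \in Z^1(L,T)$ for all $h \in gT$; (c) there exist $\gamma \in Z^1(L,T)$ and $\sigma \in Z^1(H,T)$ with $C_L(\gamma)^g \leq C_H(\sigma)$ if and only if $\zeta_{L,H,g} \in Z^1(L,T)$; (d) (for $H = L$ and $\gamma \in Z^1(L,T)$) $g$ centralises $C_L(\gamma)$ if and only if $w$ centralises $L$ and $\zeta_{L,L,g} = \gamma^g - \gamma$, where $\gamma^g(l) = \gamma(l^g)^{g^{-1}}$.
   Context: Conventions: for a group $G$ acting on the right on an additive abelian group $M$, $Z^n(G,M)$, $B^n(G,M)$ are normalised cocycles and coboundaries; $\mathrm{Ext}(\tau)$ for $\tau \in Z^2(G,M)$ is $G\times M$ with $(g,m)(h,n) = (gh, m^h+n+\tau(g,h))$. Setting: $S$ is an infinite pro-$p$-group of finite coclass, $T = \gamma_\ell(S)$ ($\ell$ large) with $T\cong\mathbb{Z}_p^d$, $P=S/T$ finite, the series $T_0=T$, $T_{i+1}=[T_i,S]$ having all indices $p$; $T$ is an additive $P$-module via conjugation; $S = \mathrm{Ext}(\rho)$ with $\rho\in Z^2(P,T)$, $\epsilon: S \to P$ the projection, $T = \{(1,t)\}$; $g \in S$ acts on $P$ and $T$ via $\epsilon(g)$. For $L\leq P$, $\overline{L}=\epsilon^{-1}(L)$.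 $\mathcal{L}$ = elementary abelian $L\leq P$ with $\rho_L \in B^2(L,T)$. For $L\in\mathcal{L}$ fix a complement $C_L = \{c_L(l)\}$ to $T$ in $\overline{L}$, $c_L(l) = (l, t_L(l))$; $C_L(\delta) = \{(l,t_L(l)+\delta(l))\}$ for $\delta\in Z^1(L,T)$. For $L,H\in\mathcal{L}$, $g\in S$ with $L^g\leq H$: $\zeta_{L,H,g}: L\to S$, $l\mapsto (c_H(l^g)^{-1})^{g^{-1}} c_L(l)$ (values identified with elements of $T$). For $w\in P$: $\hat{\zeta}_{L,H,w}: L \to T$, $l \mapsto (t_L(l)^w - t_H(l^w) + \rho(l,w) - \rho(w,l^w))^{w^{-1}}$. For $t \in T$: $\lambda_t: L\to T$, $l \mapsto [t,l] := t^l - t$, and $\lambda_t^w: L \to T$, $l \mapsto [t,l^w]^{w^{-1}}$. *)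

theory Defs
  imports "HOL-Algebra.Algebra"
begin

text \<open>P is a group (HOL-Algebra), T is the additive abelian group of type 'b,
  act m g is the right action m^g.\<close>

definition right_action :: "'a monoid \<Rightarrow> ('b::ab_group_add \<Rightarrow> 'a \<Rightarrow> 'b) \<Rightarrow> bool" where
  "right_action P act \<longleftrightarrow>
     (\<forall>g\<in>carrier P. \<forall>m n. act (m + n) g = act m g + act n g) \<and>
     (\<forall>m. act m \<one>\<^bsub>P\<^esub> = m) \<and>
     (\<forall>g\<in>carrier P. \<forall>h\<in>carrier P. \<forall>m. act m (g \<otimes>\<^bsub>P\<^esub> h) = act (act m g) h)"

definition Z2 :: "'a monoid \<Rightarrow> ('b::ab_group_add \<Rightarrow> 'a \<Rightarrow> 'b) \<Rightarrow> ('a \<Rightarrow> 'a \<Rightarrow> 'b) \<Rightarrow> bool" where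
  "Z2 P act \<tau> \<longleftrightarrow>
     (\<forall>g\<in>carrier P. \<tau> \<one>\<^bsub>P\<^esub> g = 0 \<and> \<tau> g \<one>\<^bsub>P\<^esub> = 0) \<and>
     (\<forall>g\<in>carrier P. \<forall>h\<in>carrier P. \<forall>k\<in>carrier P.
        act (\<tau> g h) k + \<tau> (g \<otimes>\<^bsub>P\<^esub> h) k = \<tau> h k + \<tau> g (h \<otimes>\<^bsub>P\<^esub> k))"

definition Z1 :: "'a monoid \<Rightarrow> ('b::ab_group_add \<Rightarrow> 'a \<Rightarrow> 'b) \<Rightarrow> 'a set \<Rightarrow> ('a \<Rightarrow> 'b) \<Rightarrow> bool" where
  "Z1 P act L \<delta> \<longleftrightarrow>
     \<delta> \<one>\<^bsub>P\<^esub> = 0 \<and>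
     (\<forall>l\<in>L. \<forall>m\<in>L. \<delta> (l \<otimes>\<^bsub>P\<^esub> m) = act (\<delta> l) m + \<delta> m)"

definition B2 :: "'a monoid \<Rightarrow> ('b::ab_group_add \<Rightarrow> 'a \<Rightarrow> 'b) \<Rightarrow> 'a set \<Rightarrow> ('a \<Rightarrow> 'a \<Rightarrow> 'b) \<Rightarrow> bool" where
  "B2 P act L \<tau> \<longleftrightarrow>
     (\<exists>f. f \<one>\<^bsub>P\<^esub> = 0 \<and>
          (\<forall>l\<in>L. \<forall>m\<in>L. \<tau> l m = act (f l) m + f m - f (l \<otimes>\<^bsub>P\<^esub> m)))"

definition Ext :: "'a monoid \<Rightarrow> ('b::ab_group_add \<Rightarrow> 'a \<Rightarrow> 'b) \<Rightarrow> ('a \<Rightarrow> 'a \<Rightarrow> 'b) \<Rightarrow> ('a \<times> 'b) monoid" where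
  "Ext P act \<tau> = \<lparr> carrier = carrier P \<times> UNIV,
      monoid.mult = (\<lambda>(g, m) (h, n). (g \<otimes>\<^bsub>P\<^esub> h, act m h + n + \<tau> g h)),
      monoid.one = (\<one>\<^bsub>P\<^esub>, 0) \<rparr>"

definition conj :: "('x, 'm) monoid_scheme \<Rightarrow> 'x \<Rightarrow> 'x \<Rightarrow> 'x" where
  "conj G x g = inv\<^bsub>G\<^esub> g \<otimes>\<^bsub>G\<^esub> x \<otimes>\<^bsub>G\<^esub> g"

definition elementary_abelian :: "'a monoid \<Rightarrow> nat \<Rightarrow> 'a set \<Rightarrow> bool" where
  "elementary_abelian P p L \<longleftrightarrow>
     subgroup L P \<and> (\<forall>x\<in>L. \<forall>y\<in>L. x \<otimes>\<^bsub>P\<^esub> y = y \<otimes>\<^bsub>P\<^esub> x) \<and>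
     (\<forall>x\<in>L. x [^]\<^bsub>P\<^esub> p = \<one>\<^bsub>P\<^esub>)"

definition calL :: "'a monoid \<Rightarrow> ('b::ab_group_add \<Rightarrow> 'a \<Rightarrow> 'b) \<Rightarrow> ('a \<Rightarrow> 'a \<Rightarrow> 'b) \<Rightarrow> nat \<Rightarrow> 'a set \<Rightarrow> bool" where
  "calL P act \<rho> p L \<longleftrightarrow> elementary_abelian P p L \<and> B2 P act L \<rho>"

definition is_complement :: "('x, 'm) monoid_scheme \<Rightarrow> 'x set \<Rightarrow> 'x set \<Rightarrow> 'x set \<Rightarrow> bool" where
  "is_complement G C K Y \<longleftrightarrow>
     subgroup C G \<and> C \<subseteq> Y \<and> C \<inter> K = {\<one>\<^bsub>G\<^esub>} \<and> set_mult G C K = Y"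

text \<open>The complement C_L(delta) = {(l, t_L(l) + delta(l))}; C_L = C_L(0).\<close>
definition Cpl :: "'a set \<Rightarrow> ('a \<Rightarrow> 'b::ab_group_add) \<Rightarrow> ('a \<Rightarrow> 'b) \<Rightarrow> ('a \<times> 'b) set" where
  "Cpl L tL \<delta> = (\<lambda>l. (l, tL l + \<delta> l)) ` L"

text \<open>zeta_{L,H,g}(l) = (c_H(l^g)^{-1})^{g^{-1}} c_L(l), an element of S, where l^g = l^{epsilon(g)}.\<close>
definition zeta :: "'a monoid \<Rightarrow> ('b::ab_group_add \<Rightarrow> 'a \<Rightarrow> 'b) \<Rightarrow> ('a \<Rightarrow> 'a \<Rightarrow> 'b)
    \<Rightarrow> ('a \<Rightarrow> 'b) \<Rightarrow> ('a \<Rightarrow> 'b) \<Rightarrow> 'a \<times> 'b \<Rightarrow> 'a \<Rightarrow> 'a \<times> 'b" where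
  "zeta P act \<rho> tL tH g l =
     (let S = Ext P act \<rho>; lg = conj P l (fst g)
      in conj S (inv\<^bsub>S\<^esub> (lg, tH lg)) (inv\<^bsub>S\<^esub> g) \<otimes>\<^bsub>S\<^esub> (l, tL l))"

text \<open>zeta viewed as a T-valued map (T = {(1,t)} identified with 'b).\<close>
definition zetaT :: "'a monoid \<Rightarrow> ('b::ab_group_add \<Rightarrow> 'a \<Rightarrow> 'b) \<Rightarrow> ('a \<Rightarrow> 'a \<Rightarrow> 'b)
    \<Rightarrow> ('a \<Rightarrow> 'b) \<Rightarrow> ('a \<Rightarrow> 'b) \<Rightarrow> 'a \<times> 'b \<Rightarrow> 'a \<Rightarrow> 'b" where
  "zetaT P act \<rho> tL tH g l = snd (zeta P act \<rho> tL tH g l)"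

definition zeta_hat :: "'a monoid \<Rightarrow> ('b::ab_group_add \<Rightarrow> 'a \<Rightarrow> 'b) \<Rightarrow> ('a \<Rightarrow> 'a \<Rightarrow> 'b)
    \<Rightarrow> ('a \<Rightarrow> 'b) \<Rightarrow> ('a \<Rightarrow> 'b) \<Rightarrow> 'a \<Rightarrow> 'a \<Rightarrow> 'b" where
  "zeta_hat P act \<rho> tL tH w l =
     (let lw = conj P l w
      in act (act (tL l) w - tH lw + \<rho> l w - \<rho> w lw) (inv\<^bsub>P\<^esub> w))"

definition lambda_w :: "'a monoid \<Rightarrow> ('b::ab_group_add \<Rightarrow> 'a \<Rightarrow> 'b) \<Rightarrow> 'b \<Rightarrow> 'a \<Rightarrow> 'a \<Rightarrow> 'b" where
  "lambda_w P act t w l = act (act t (conj P l w) - t) (inv\<^bsub>P\<^esub> w)"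

end

theory Submission
  imports Defs
begin

lemma group_comm_conj:
  assumes "group G" "x \<in> carrier G" "g \<in> carrier G"
  shows "x \<otimes>\<^bsub>G\<^esub> g = g \<otimes>\<^bsub>G\<^esub> x \<longleftrightarrow> conj G x g = x"
proof -
  interpret G: group G by fact
  have "conj G x g = x \<longleftrightarrow> x = inv\<^bsub>G\<^esub> g \<otimes>\<^bsub>G\<^esub> (x \<otimes>\<^bsub>G\<^esub> g)"
    unfolding conj_def using assms by (auto simp: G.m_assoc)
  also have "\<dots> \<longleftrightarrow> x \<otimes>\<^bsub>G\<^esub> g = g \<otimes>\<^bsub>G\<^esub> x"
    using assms by (simp add: G.inv_solve_left)
  finally show ?thesis by simp
qed


context
  fixes P :: "'a monoid" and act :: "'b::ab_group_add \<Rightarrow> 'a \<Rightarrow> 'b" and \<rho> :: "'a \<Rightarrow> 'a \<Rightarrow> 'b"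
  assumes grp: "group P" and mod: "right_action P act" and coc: "Z2 P act \<rho>"
begin

lemma act_add: "g \<in> carrier P \<Longrightarrow> act (m + n) g = act m g + act n g"
  using mod unfolding right_action_def by blast
lemma act_one: "act m \<one>\<^bsub>P\<^esub> = m"
  using mod unfolding right_action_def by blast
lemma act_mult: "g \<in> carrier P \<Longrightarrow> h \<in> carrier P \<Longrightarrow> act m (g \<otimes>\<^bsub>P\<^esub> h) = act (act m g) h"
  using mod unfolding right_action_def by blast
lemma act_zero: "g \<in> carrier P \<Longrightarrow> act 0 g = 0"
  using act_add[of g 0 0] by simp
lemma act_neg: "g \<in> carrier P \<Longrightarrow> act (- m) g = - act m g"
  using act_add[of g m "-m"] act_zero[of g] by (metis add.right_inverse minus_unique)
lemma act_diff: "g \<in> carrier P \<Longrightarrow> act (m - n) g = act m g - act n g"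
  using act_add[of g m "-n"] act_neg[of g n] by simp
lemma rho_1: "g \<in> carrier P \<Longrightarrow> \<rho> \<one>\<^bsub>P\<^esub> g = 0" "g \<in> carrier P \<Longrightarrow> \<rho> g \<one>\<^bsub>P\<^esub> = 0"
  using coc unfolding Z2_def by auto
lemma rho_c: "g \<in> carrier P \<Longrightarrow> h \<in> carrier P \<Longrightarrow> k \<in> carrier P \<Longrightarrow>
   act (\<rho> g h) k + \<rho> (g \<otimes>\<^bsub>P\<^esub> h) k = \<rho> h k + \<rho> g (h \<otimes>\<^bsub>P\<^esub> k)"
  using coc unfolding Z2_def by blast

lemma act_inv1: "w \<in> carrier P \<Longrightarrow> act (act xx w) (m_inv P w) = xx"
  using act_mult[of w "m_inv P w" xx] act_one grp by (simp add: group.r_inv)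
lemma act_inv2: "w \<in> carrier P \<Longrightarrow> act (act xx (m_inv P w)) w = xx"
  using act_mult[of "m_inv P w" w xx] act_one grp by (simp add: group.l_inv)

lemma Ext_group: "group (Ext P act \<rho>)"
proof (rule groupI)
  interpret P: group P by (rule grp)
  let ?S = "Ext P act \<rho>"
  show "\<And>x y. x \<in> carrier ?S \<Longrightarrow> y \<in> carrier ?S \<Longrightarrow> x \<otimes>\<^bsub>?S\<^esub> y \<in> carrier ?S"
    by (auto simp: Ext_def)
  show "\<one>\<^bsub>?S\<^esub> \<in> carrier ?S" by (simp add: Ext_def)
  show "\<And>x y z. x \<in> carrier ?S \<Longrightarrow> y \<in> carrier ?S \<Longrightarrow> z \<in> carrier ?S \<Longrightarrow>
      x \<otimes>\<^bsub>?S\<^esub> y \<otimes>\<^bsub>?S\<^esub> z = x \<otimes>\<^bsub>?S\<^esub> (y \<otimes>\<^bsub>?S\<^esub> z)"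
  proof -
    fix x y z assume "x \<in> carrier ?S" "y \<in> carrier ?S" "z \<in> carrier ?S"
    then obtain g m h n k q where xyz: "x = (g,m)" "y = (h,n)" "z = (k,q)"
      and c: "g \<in> carrier P" "h \<in> carrier P" "k \<in> carrier P" by (auto simp: Ext_def)
    have "act (act m h + n + \<rho> g h) k + q + \<rho> (g \<otimes>\<^bsub>P\<^esub> h) k
        = act m (h \<otimes>\<^bsub>P\<^esub> k) + (act n k + q + \<rho> h k) + \<rho> g (h \<otimes>\<^bsub>P\<^esub> k)"
      using c rho_c[of g h k] by (simp add: act_add act_mult algebra_simps)
    then show "x \<otimes>\<^bsub>?S\<^esub> y \<otimes>\<^bsub>?S\<^esub> z = x \<otimes>\<^bsub>?S\<^esub> (y \<otimes>\<^bsub>?S\<^esub> z)"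
      using xyz c by (simp add: Ext_def P.m_assoc)
  qed
  show "\<And>x. x \<in> carrier ?S \<Longrightarrow> \<one>\<^bsub>?S\<^esub> \<otimes>\<^bsub>?S\<^esub> x = x"
    by (auto simp: Ext_def act_zero rho_1)
  show "\<And>x. x \<in> carrier ?S \<Longrightarrow> \<exists>y\<in>carrier ?S. y \<otimes>\<^bsub>?S\<^esub> x = \<one>\<^bsub>?S\<^esub>"
  proof -
    fix x assume "x \<in> carrier ?S"
    then obtain g m where x: "x = (g,m)" and c: "g \<in> carrier P" by (auto simp: Ext_def)
    let ?y = "(m_inv P g, act (- m - \<rho> (m_inv P g) g) (m_inv P g))"
    have "?y \<otimes>\<^bsub>?S\<^esub> x = \<one>\<^bsub>?S\<^esub>"
      using c by (simp add: Ext_def x act_inv2)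
    moreover have "?y \<in> carrier ?S" using c by (simp add: Ext_def)
    ultimately show "\<exists>y\<in>carrier ?S. y \<otimes>\<^bsub>?S\<^esub> x = \<one>\<^bsub>?S\<^esub>" by blast
  qed
qed

lemma conj_P_closed: "l \<in> carrier P \<Longrightarrow> w \<in> carrier P \<Longrightarrow> conj P l w \<in> carrier P"
  using grp by (simp add: conj_def group.subgroupE(3) group.subgroup_self monoid.m_closed group.is_monoid)

lemma conj_Ext:
  assumes l: "l \<in> carrier P" and w: "w \<in> carrier P"
  shows "conj (Ext P act \<rho>) (l,u) (w,t) = (conj P l w,
     act u w + t - act t (conj P l w) + \<rho> l w - \<rho> w (conj P l w))"
proof -
  interpret P: group P by (rule grp)
  interpret S: group "Ext P act \<rho>" by (rule Ext_group)
  let ?S = "Ext P act \<rho>"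
  let ?R = "(conj P l w, act u w + t - act t (conj P l w) + \<rho> l w - \<rho> w (conj P l w))"
  have cR: "?R \<in> carrier ?S" using l w conj_P_closed by (simp add: Ext_def)
  have cg: "(w,t) \<in> carrier ?S" "(l,u) \<in> carrier ?S" using l w by (auto simp: Ext_def)
  have wl: "w \<otimes>\<^bsub>P\<^esub> conj P l w = l \<otimes>\<^bsub>P\<^esub> w"
    using l w by (simp add: conj_def P.m_assoc[symmetric])
  have eq: "(w,t) \<otimes>\<^bsub>?S\<^esub> ?R = (l,u) \<otimes>\<^bsub>?S\<^esub> (w,t)"
    by (simp add: Ext_def wl)
  have "conj ?S (l,u) (w,t) = inv\<^bsub>?S\<^esub> (w,t) \<otimes>\<^bsub>?S\<^esub> ((w,t) \<otimes>\<^bsub>?S\<^esub> ?R)"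
    unfolding conj_def[of ?S] using cg by (simp add: S.m_assoc eq)
  also have "\<dots> = ?R" using cg cR by (simp add: S.m_assoc[symmetric])
  finally show ?thesis .
qed

lemma zeta_formula:
  assumes l: "l \<in> carrier P" and w: "w \<in> carrier P"
  shows "zeta P act \<rho> tL tH (w,t) l = (\<one>\<^bsub>P\<^esub>,
     act (act (tL l) w + t - act t (conj P l w) + \<rho> l w - \<rho> w (conj P l w) - tH (conj P l w)) (inv\<^bsub>P\<^esub> w))"
proof -
  interpret P: group P by (rule grp)
  interpret S: group "Ext P act \<rho>" by (rule Ext_group)
  let ?S = "Ext P act \<rho>"
  define lg where "lg = conj P l w"
  have clg: "lg \<in> carrier P" using lg_def l w conj_P_closed by simp
  define Y where "Y = act (tL l) w + t - act t lg + \<rho> l w - \<rho> w lg"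
  define x where "x = zeta P act \<rho> tL tH (w,t) l"
  define d where "d = (lg, tH lg)"
  define c where "c = (l, tL l)"
  define g where "g = (w, t)"
  have cs: "d \<in> carrier ?S" "c \<in> carrier ?S" "g \<in> carrier ?S"
    using clg l w by (auto simp: Ext_def d_def c_def g_def)
  have xd: "x = g \<otimes>\<^bsub>?S\<^esub> inv\<^bsub>?S\<^esub> d \<otimes>\<^bsub>?S\<^esub> inv\<^bsub>?S\<^esub> g \<otimes>\<^bsub>?S\<^esub> c"
    unfolding x_def zeta_def Let_def conj_def[of ?S] using cs
    by (simp add: lg_def d_def g_def c_def)
  have cx: "x \<in> carrier ?S" using xd cs by simp
  have "d \<otimes>\<^bsub>?S\<^esub> conj ?S x g = conj ?S c g"
  proof -
    have canc: "\<And>a z. a \<in> carrier ?S \<Longrightarrow> z \<in> carrier ?S \<Longrightarrow> inv\<^bsub>?S\<^esub> a \<otimes>\<^bsub>?S\<^esub> (a \<otimes>\<^bsub>?S\<^esub> z) = z"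
      "\<And>a z. a \<in> carrier ?S \<Longrightarrow> z \<in> carrier ?S \<Longrightarrow> a \<otimes>\<^bsub>?S\<^esub> (inv\<^bsub>?S\<^esub> a \<otimes>\<^bsub>?S\<^esub> z) = z"
      by (simp_all add: S.m_assoc[symmetric])
    show ?thesis unfolding xd conj_def[of ?S] using cs by (simp add: S.m_assoc canc)
  qed
  moreover have "conj ?S c g = (lg, Y)" unfolding c_def g_def Y_def lg_def
    using l w by (simp add: conj_Ext)
  moreover obtain x1 x2 where x12: "x = (x1, x2)" and cx1: "x1 \<in> carrier P"
    using cx by (auto simp: Ext_def)
  ultimately have E: "d \<otimes>\<^bsub>?S\<^esub> conj ?S (x1,x2) (w,t) = (lg, Y)" by (simp add: g_def)
  have "lg \<otimes>\<^bsub>P\<^esub> conj P x1 w = lg"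
    using E[unfolded conj_Ext[OF cx1 w]] by (simp add: d_def Ext_def)
  hence "conj P x1 w = \<one>\<^bsub>P\<^esub>" using clg cx1 w conj_P_closed
    by (metis P.l_cancel_one)
  hence x1: "x1 = \<one>\<^bsub>P\<^esub>" using cx1 w unfolding conj_def
    by (metis P.inv_closed P.l_cancel_one P.m_closed P.r_inv P.m_assoc P.inv_solve_right P.l_one)
  have "conj ?S (x1,x2) (w,t) = (\<one>\<^bsub>P\<^esub>, act x2 w)"
    using w by (simp add: conj_Ext[OF P.one_closed w] x1 act_one rho_1 conj_def[of P])
  with E have "tH lg + act x2 w = Y"
    using clg by (simp add: d_def Ext_def act_one rho_1)
  hence "act x2 w = Y - tH lg" by (simp add: algebra_simps)
  hence "x2 = act (Y - tH lg) (inv\<^bsub>P\<^esub> w)" using act_inv1[OF w, of x2] by simp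
  thus ?thesis using x12 x1 unfolding x_def Y_def lg_def by simp
qed

lemma zetaT_eq:
  assumes l: "l \<in> carrier P" and w: "w \<in> carrier P"
  shows "zeta P act \<rho> tL tH (w,t) l = (\<one>\<^bsub>P\<^esub>, zeta_hat P act \<rho> tL tH w l - lambda_w P act t w l)"
proof -
  have iw: "inv\<^bsub>P\<^esub> w \<in> carrier P" using w grp by (simp add: group.inv_closed)
  show ?thesis
    unfolding zeta_formula[OF l w] zeta_hat_def lambda_w_def Let_def act_diff[OF iw, symmetric]
    by (simp add: algebra_simps)
qed

lemma conj2:
  assumes l: "l \<in> carrier P" and w: "w \<in> carrier P"
  shows "conj (Ext P act \<rho>) (l, tL l + u) (w,t) = (conj P l w,
     tH (conj P l w) + act (zetaT P act \<rho> tL tH (w,t) l) w + act u w)"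
  unfolding conj_Ext[OF l w] zetaT_def zeta_formula[OF l w] snd_conv act_inv2[OF w]
  using w by (simp add: act_add algebra_simps)

lemma conj_one: "w \<in> carrier P \<Longrightarrow> conj P \<one>\<^bsub>P\<^esub> w = \<one>\<^bsub>P\<^esub>"
  using grp by (simp add: conj_def group.l_inv group.is_monoid monoid.r_one group.inv_closed)

lemma conj_mult: "l \<in> carrier P \<Longrightarrow> m \<in> carrier P \<Longrightarrow> w \<in> carrier P \<Longrightarrow>
   conj P (l \<otimes>\<^bsub>P\<^esub> m) w = conj P l w \<otimes>\<^bsub>P\<^esub> conj P m w"
proof -
  interpret P: group P by (rule grp)
  assume c: "l \<in> carrier P" "m \<in> carrier P" "w \<in> carrier P"
  have "w \<otimes>\<^bsub>P\<^esub> (inv\<^bsub>P\<^esub> w \<otimes>\<^bsub>P\<^esub> (m \<otimes>\<^bsub>P\<^esub> w)) = m \<otimes>\<^bsub>P\<^esub> w"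
    using c by (simp add: P.m_assoc[symmetric])
  thus ?thesis using c unfolding conj_def by (simp add: P.m_assoc)
qed

lemma act_conj: "m \<in> carrier P \<Longrightarrow> w \<in> carrier P \<Longrightarrow>
  act (act xx (conj P m w)) (inv\<^bsub>P\<^esub> w) = act (act xx (inv\<^bsub>P\<^esub> w)) m"
proof -
  interpret P: group P by (rule grp)
  assume c: "m \<in> carrier P" "w \<in> carrier P"
  have "act (act xx (conj P m w)) (inv\<^bsub>P\<^esub> w) = act xx (conj P m w \<otimes>\<^bsub>P\<^esub> inv\<^bsub>P\<^esub> w)"
    using c conj_P_closed by (simp add: act_mult)
  also have "conj P m w \<otimes>\<^bsub>P\<^esub> inv\<^bsub>P\<^esub> w = inv\<^bsub>P\<^esub> w \<otimes>\<^bsub>P\<^esub> m"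
    using c unfolding conj_def by (simp add: P.m_assoc)
  also have "act xx \<dots> = act (act xx (inv\<^bsub>P\<^esub> w)) m" using c by (simp add: act_mult)
  finally show ?thesis .
qed

lemma Z1_twist:
  assumes Z: "Z1 P act H \<sigma>" and L: "subgroup L P" and w: "w \<in> carrier P"
    and LH: "\<forall>l\<in>L. conj P l w \<in> H"
  shows "Z1 P act L (\<lambda>l. act (\<sigma> (conj P l w)) (inv\<^bsub>P\<^esub> w))"
proof -
  interpret P: group P by (rule grp)
  have iw: "inv\<^bsub>P\<^esub> w \<in> carrier P" using w by simp
  show ?thesis unfolding Z1_def
  proof (intro conjI ballI)
    show "act (\<sigma> (conj P \<one>\<^bsub>P\<^esub> w)) (inv\<^bsub>P\<^esub> w) = 0"
      using Z w iw by (simp add: conj_one Z1_def act_zero)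
    fix l m assume lm: "l \<in> L" "m \<in> L"
    hence c: "l \<in> carrier P" "m \<in> carrier P" using L subgroup.subset by blast+
    have "\<sigma> (conj P (l \<otimes>\<^bsub>P\<^esub> m) w) = act (\<sigma> (conj P l w)) (conj P m w) + \<sigma> (conj P m w)"
      using Z LH lm c w by (simp add: conj_mult Z1_def)
    thus "act (\<sigma> (conj P (l \<otimes>\<^bsub>P\<^esub> m) w)) (inv\<^bsub>P\<^esub> w) =
          act (act (\<sigma> (conj P l w)) (inv\<^bsub>P\<^esub> w)) m + act (\<sigma> (conj P m w)) (inv\<^bsub>P\<^esub> w)"
      using c w iw by (simp add: act_add act_conj)
  qed
qed

lemma Z1_lambda: "Z1 P act (carrier P) (\<lambda>h. act t h - t)"
  unfolding Z1_def by (simp add: act_one act_mult act_diff)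

lemma Z1_lambda_w: "subgroup L P \<Longrightarrow> w \<in> carrier P \<Longrightarrow> Z1 P act L (lambda_w P act t w)"
  using Z1_twist[OF Z1_lambda, of L w t] conj_P_closed subgroup.subset
  unfolding lambda_w_def by blast

lemma Z1_cong: "subgroup L P \<Longrightarrow> (\<And>l. l \<in> L \<Longrightarrow> f l = g l) \<Longrightarrow> Z1 P act L f = Z1 P act L g"
  unfolding Z1_def by (simp add: subgroup.m_closed subgroup.one_closed)

lemma Z1_add: "subgroup L P \<Longrightarrow> Z1 P act L f \<Longrightarrow> Z1 P act L g \<Longrightarrow> Z1 P act L (\<lambda>l. f l + g l)"
  unfolding Z1_def by (auto simp: act_add subgroup.subset[THEN subsetD])

lemma Z1_neg: "subgroup L P \<Longrightarrow> Z1 P act L f \<Longrightarrow> Z1 P act L (\<lambda>l. - f l)"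
  unfolding Z1_def by (auto simp: act_neg subgroup.subset[THEN subsetD])

lemma Z1_diff: "subgroup L P \<Longrightarrow> Z1 P act L f \<Longrightarrow> Z1 P act L g \<Longrightarrow> Z1 P act L (\<lambda>l. f l - g l)"
  using Z1_add[of L f "\<lambda>l. - g l"] Z1_neg[of L g] by simp

lemma Z1_zero: "subgroup L P \<Longrightarrow> Z1 P act L (\<lambda>_. 0)"
  unfolding Z1_def by (auto simp: act_zero subgroup.subset[THEN subsetD])

end

theorem lemma3p3:
  fixes P :: "'a monoid" and act :: "'b::ab_group_add \<Rightarrow> 'a \<Rightarrow> 'b"
    and \<rho> :: "'a \<Rightarrow> 'a \<Rightarrow> 'b" and p :: nat
    and L H :: "'a set" and tL tH :: "'a \<Rightarrow> 'b" and w :: 'a and t :: 'b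
  assumes grp: "group P" and fin: "finite (carrier P)"
    and pr: "Factorial_Ring.prime p" and pgrp: "\<exists>k. card (carrier P) = p ^ k"
    and mod: "right_action P act" and coc: "Z2 P act \<rho>"
    and LL: "calL P act \<rho> p L" and HL: "calL P act \<rho> p H"
    and CL: "is_complement (Ext P act \<rho>) (Cpl L tL (\<lambda>_. 0)) ({\<one>\<^bsub>P\<^esub>} \<times> UNIV) (L \<times> UNIV)"
    and CH: "is_complement (Ext P act \<rho>) (Cpl H tH (\<lambda>_. 0)) ({\<one>\<^bsub>P\<^esub>} \<times> UNIV) (H \<times> UNIV)"
    and w: "w \<in> carrier P"
    and LgH: "\<forall>l\<in>L. conj P l w \<in> H"
  shows
    "(\<forall>l\<in>L. zeta P act \<rho> tL tH (w, t) l
              = (\<one>\<^bsub>P\<^esub>, zeta_hat P act \<rho> tL tH w l - lambda_w P act t w l))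
     \<and> (Z1 P act L (zetaT P act \<rho> tL tH (w, t)) \<longrightarrow>
          (\<forall>h \<in> (w, t) <#\<^bsub>Ext P act \<rho>\<^esub> ({\<one>\<^bsub>P\<^esub>} \<times> UNIV).
              Z1 P act L (zetaT P act \<rho> tL tH h)))
     \<and> ((\<exists>\<gamma> \<sigma>. Z1 P act L \<gamma> \<and> Z1 P act H \<sigma> \<and>
            (\<lambda>x. conj (Ext P act \<rho>) x (w, t)) ` Cpl L tL \<gamma> \<subseteq> Cpl H tH \<sigma>)
        \<longleftrightarrow> Z1 P act L (zetaT P act \<rho> tL tH (w, t)))
     \<and> (H = L \<longrightarrow>
          (\<forall>\<gamma>. Z1 P act L \<gamma> \<longrightarrow>
            ((\<forall>x\<in>Cpl L tL \<gamma>. x \<otimes>\<^bsub>Ext P act \<rho>\<^esub> (w, t) = (w, t) \<otimes>\<^bsub>Ext P act \<rho>\<^esub> x)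
             \<longleftrightarrow> ((\<forall>l\<in>L. l \<otimes>\<^bsub>P\<^esub> w = w \<otimes>\<^bsub>P\<^esub> l) \<and>
                  (\<forall>l\<in>L. zetaT P act \<rho> tL tL (w, t) l
                          = act (\<gamma> (conj P l w)) (inv\<^bsub>P\<^esub> w) - \<gamma> l)))))"
proof -
  note G = grp mod coc
  interpret P: group P by (rule grp)
  interpret S: group "Ext P act \<rho>" by (rule Ext_group[OF G])
  let ?S = "Ext P act \<rho>"
  have Lsg: "subgroup L P" using LL unfolding calL_def elementary_abelian_def by blast
  have Hsg: "subgroup H P" using HL unfolding calL_def elementary_abelian_def by blast
  have Lc: "\<And>l. l \<in> L \<Longrightarrow> l \<in> carrier P" using Lsg subgroup.subset by blast
  have iw: "inv\<^bsub>P\<^esub> w \<in> carrier P" using w by simp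
  define z where "z = zetaT P act \<rho> tL tH (w, t)"
  have actiff: "\<And>a b. act a w = b \<longleftrightarrow> a = act b (inv\<^bsub>P\<^esub> w)"
    using act_inv1[OF G w] act_inv2[OF G w] by metis
  have A: "\<forall>l\<in>L. zeta P act \<rho> tL tH (w, t) l
              = (\<one>\<^bsub>P\<^esub>, zeta_hat P act \<rho> tL tH w l - lambda_w P act t w l)"
    using zetaT_eq[OF G] Lc w by blast
  have B: "Z1 P act L (zetaT P act \<rho> tL tH (w, t)) \<longrightarrow>
          (\<forall>h \<in> (w, t) <#\<^bsub>?S\<^esub> ({\<one>\<^bsub>P\<^esub>} \<times> UNIV).
              Z1 P act L (zetaT P act \<rho> tL tH h))"
  proof (intro impI ballI)
    fix h assume Z: "Z1 P act L (zetaT P act \<rho> tL tH (w, t))"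
      and h: "h \<in> (w, t) <#\<^bsub>?S\<^esub> ({\<one>\<^bsub>P\<^esub>} \<times> UNIV)"
    then obtain s where "h = (w,t) \<otimes>\<^bsub>?S\<^esub> (\<one>\<^bsub>P\<^esub>, s)" unfolding l_coset_def by auto
    hence h': "h = (w, t + s)" using w by (simp add: Ext_def act_one[OF G] rho_1[OF G])
    have eq: "\<And>l. l \<in> L \<Longrightarrow> zetaT P act \<rho> tL tH h l =
       zetaT P act \<rho> tL tH (w, t) l + lambda_w P act t w l - lambda_w P act (t+s) w l"
      unfolding h' zetaT_def using zetaT_eq[OF G] Lc w by simp
    have "Z1 P act L (\<lambda>l. zetaT P act \<rho> tL tH (w, t) l + lambda_w P act t w l - lambda_w P act (t+s) w l)"
      by (rule Z1_diff[OF G Lsg] Z1_add[OF G Lsg] Z Z1_lambda_w[OF G Lsg w])+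
    thus "Z1 P act L (zetaT P act \<rho> tL tH h)" using Z1_cong[OF G Lsg eq] by simp
  qed
  have C: "(\<exists>\<gamma> \<sigma>. Z1 P act L \<gamma> \<and> Z1 P act H \<sigma> \<and>
            (\<lambda>x. conj ?S x (w, t)) ` Cpl L tL \<gamma> \<subseteq> Cpl H tH \<sigma>)
        \<longleftrightarrow> Z1 P act L z"
  proof
    assume "\<exists>\<gamma> \<sigma>. Z1 P act L \<gamma> \<and> Z1 P act H \<sigma> \<and>
            (\<lambda>x. conj ?S x (w, t)) ` Cpl L tL \<gamma> \<subseteq> Cpl H tH \<sigma>"
    then obtain \<gamma> \<sigma> where g: "Z1 P act L \<gamma>" and s: "Z1 P act H \<sigma>"
      and sub: "(\<lambda>x. conj ?S x (w, t)) ` Cpl L tL \<gamma> \<subseteq> Cpl H tH \<sigma>" by blast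
    have eq: "z l = act (\<sigma> (conj P l w)) (inv\<^bsub>P\<^esub> w) - \<gamma> l" if l: "l \<in> L" for l
    proof -
      have "conj ?S (l, tL l + \<gamma> l) (w,t) \<in> Cpl H tH \<sigma>" using sub l unfolding Cpl_def by blast
      then obtain h where "h \<in> H" "conj ?S (l, tL l + \<gamma> l) (w,t) = (h, tH h + \<sigma> h)"
        unfolding Cpl_def by blast
      hence "tH (conj P l w) + act (z l) w + act (\<gamma> l) w = tH (conj P l w) + \<sigma> (conj P l w)"
        using conj2[OF G Lc[OF l] w, where tL=tL and u="\<gamma> l" and tH=tH and t=t] unfolding z_def by auto
      hence "act (z l + \<gamma> l) w = \<sigma> (conj P l w)" using w by (simp add: act_add[OF G] add.assoc)
      thus ?thesis unfolding actiff by (simp add: algebra_simps)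
    qed
    have "Z1 P act L (\<lambda>l. act (\<sigma> (conj P l w)) (inv\<^bsub>P\<^esub> w) - \<gamma> l)"
      by (rule Z1_diff[OF G Lsg Z1_twist[OF G s Lsg w] g]) (use LgH in blast)
    thus "Z1 P act L z" using Z1_cong[OF G Lsg eq] by simp
  next
    assume Z: "Z1 P act L z"
    show "\<exists>\<gamma> \<sigma>. Z1 P act L \<gamma> \<and> Z1 P act H \<sigma> \<and>
            (\<lambda>x. conj ?S x (w, t)) ` Cpl L tL \<gamma> \<subseteq> Cpl H tH \<sigma>"
    proof (intro exI conjI)
      show "Z1 P act L (\<lambda>l. - z l)" by (rule Z1_neg[OF G Lsg Z])
      show "Z1 P act H (\<lambda>_. 0)" by (rule Z1_zero[OF G Hsg])
      show "(\<lambda>x. conj ?S x (w, t)) ` Cpl L tL (\<lambda>l. - z l) \<subseteq> Cpl H tH (\<lambda>_. 0)"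
      proof
        fix y assume "y \<in> (\<lambda>x. conj ?S x (w, t)) ` Cpl L tL (\<lambda>l. - z l)"
        then obtain l where l: "l \<in> L" and y: "y = conj ?S (l, tL l + - z l) (w,t)"
          unfolding Cpl_def by blast
        have "y = (conj P l w, tH (conj P l w) + 0)"
          unfolding y using w conj2[OF G Lc[OF l] w, where tL=tL and u="- z l" and tH=tH and t=t]
          by (simp add: act_neg[OF G] z_def)
        thus "y \<in> Cpl H tH (\<lambda>_. 0)" unfolding Cpl_def using LgH l by blast
      qed
    qed
  qed
  have D: "H = L \<longrightarrow>
          (\<forall>\<gamma>. Z1 P act L \<gamma> \<longrightarrow>
            ((\<forall>x\<in>Cpl L tL \<gamma>. x \<otimes>\<^bsub>?S\<^esub> (w, t) = (w, t) \<otimes>\<^bsub>?S\<^esub> x)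
             \<longleftrightarrow> ((\<forall>l\<in>L. l \<otimes>\<^bsub>P\<^esub> w = w \<otimes>\<^bsub>P\<^esub> l) \<and>
                  (\<forall>l\<in>L. zetaT P act \<rho> tL tL (w, t) l
                          = act (\<gamma> (conj P l w)) (inv\<^bsub>P\<^esub> w) - \<gamma> l))))"
  proof (intro impI allI)
    fix \<gamma> assume HL: "H = L" and g: "Z1 P act L \<gamma>"
    have per: "((l, tL l + \<gamma> l) \<otimes>\<^bsub>?S\<^esub> (w, t) = (w, t) \<otimes>\<^bsub>?S\<^esub> (l, tL l + \<gamma> l))
       \<longleftrightarrow> (l \<otimes>\<^bsub>P\<^esub> w = w \<otimes>\<^bsub>P\<^esub> l \<and>
             zetaT P act \<rho> tL tL (w, t) l = act (\<gamma> (conj P l w)) (inv\<^bsub>P\<^esub> w) - \<gamma> l)"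
      if l: "l \<in> L" for l
    proof -
      have cl: "l \<in> carrier P" using Lc l .
      have c1: "(l, tL l + \<gamma> l) \<in> carrier ?S" "(w,t) \<in> carrier ?S" using cl w by (auto simp: Ext_def)
      have cc: "conj P l w = l \<longleftrightarrow> l \<otimes>\<^bsub>P\<^esub> w = w \<otimes>\<^bsub>P\<^esub> l"
        using group_comm_conj[OF grp cl w] by simp
      let ?z = "zetaT P act \<rho> tL tL (w, t) l"
      have "((l, tL l + \<gamma> l) \<otimes>\<^bsub>?S\<^esub> (w, t) = (w, t) \<otimes>\<^bsub>?S\<^esub> (l, tL l + \<gamma> l))
         \<longleftrightarrow> conj ?S (l, tL l + \<gamma> l) (w,t) = (l, tL l + \<gamma> l)"
        using group_comm_conj[OF Ext_group[OF G] c1] by simp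
      also have "\<dots> \<longleftrightarrow> conj P l w = l \<and> tL (conj P l w) + act ?z w + act (\<gamma> l) w = tL l + \<gamma> l"
        by (simp only: conj2[OF G cl w, where tL=tL and u="\<gamma> l" and tH=tL and t=t] prod.inject)
      also have "\<dots> \<longleftrightarrow> conj P l w = l \<and> ?z = act (\<gamma> (conj P l w)) (inv\<^bsub>P\<^esub> w) - \<gamma> l"
      proof (cases "conj P l w = l")
        case True
        have "tL l + act ?z w + act (\<gamma> l) w = tL l + \<gamma> l \<longleftrightarrow> act (?z + \<gamma> l) w = \<gamma> l"
          using w by (simp add: act_add[OF G] add.assoc)
        also have "\<dots> \<longleftrightarrow> ?z = act (\<gamma> l) (inv\<^bsub>P\<^esub> w) - \<gamma> l"
          unfolding actiff by (auto simp: algebra_simps)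
        finally show ?thesis using True by simp
      qed simp
      finally show ?thesis using cc by simp
    qed
    show "(\<forall>x\<in>Cpl L tL \<gamma>. x \<otimes>\<^bsub>?S\<^esub> (w, t) = (w, t) \<otimes>\<^bsub>?S\<^esub> x)
             \<longleftrightarrow> ((\<forall>l\<in>L. l \<otimes>\<^bsub>P\<^esub> w = w \<otimes>\<^bsub>P\<^esub> l) \<and>
                  (\<forall>l\<in>L. zetaT P act \<rho> tL tL (w, t) l
                          = act (\<gamma> (conj P l w)) (inv\<^bsub>P\<^esub> w) - \<gamma> l))"
      unfolding Cpl_def using per by blast
  qed
  show ?thesis using A B C D unfolding z_def by blast
qed

end
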